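(* Let $(G,\rho)$ be a reversible random network and let $\zeta>0$. Suppose that for every $\delta>0$, almost surely, for all sufficiently large $R$, \[ \max\{\mathsf R^G_{\mathrm{eff}}(\rho\leftrightarrow x):x\in B^G(\rho,R)\}\le R^{\zeta+\delta} \quad\text{and}\quad \mathsf R^G_{\mathrm{eff}}(\rho\leftrightarrow\bar B^G(\rho,R))\ge R^{\zeta-\delta}. \] Then $\tilde\zeta=\tilde\zeta_0=\zeta$.
   Context: A random rooted network $(G,\rho,c^G,\xi)$: random locally finite connected graph $G$ (self-loops allowed), root $\rho$, conductances $c^G:E(G)\to[0,\infty)$, marking $\xi$. $c^G_u=\sum_{v:\{u,v\}\in E(G)}c^G(\{u,v\})$; random walk $X_0=\rho$, $\Pr[X_{n+1}=v\mid X_n=u]=c^G(\{u,v\})/c^G_u$. Reversible: a.s. $c^G_\rho>0$ and $(G,X_0,X_1,c^G,\xi)\overset d=(G,X_1,X_0,c^G,\xi)$. $d^G$ graph distance, $B^G(x,R)=\{y:d^G(x,y)\le R\}$, $\bar B^G(x,R)=V(G)\setminus B^G(x,R)$, $\mathsf R^G_{\mathrm{eff}}$ effective resistance in the network $(G,c^G)$. $\tilde\zeta$ is the supremum of the values $\zeta'$ such that for every $\delta>0$, a.s. for all but finitely many $R\in\mathbb N$, $\mathsf R^G_{\mathrm{eff}}(B^G(\rho,R^{1-\delta})\leftrightarrow\bar B^G(\rho,R))\ge R^{\zeta'-\delta}$; $\tilde\zeta_0$ is the infimum of the values $\zeta'$ such that for every $\delta>0$, a.s. for all but finitely many $R\in\mathbb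 N$, $\mathsf R^G_{\mathrm{eff}}(\rho\leftrightarrow\bar B^G(\rho,R))\le R^{\zeta'+\delta}$. *)

theory Defs
  imports "HOL-Probability.Probability"
begin

text \<open>A (labelled) network on vertex labels in nat: vertex set, adjacency
  (simple graph, self-loops allowed), conductances.\<close>
type_synonym net = "(nat \<Rightarrow> bool) \<times> (nat \<Rightarrow> nat \<Rightarrow> bool) \<times> (nat \<Rightarrow> nat \<Rightarrow> real)"

definition nV :: "net \<Rightarrow> nat \<Rightarrow> bool" where "nV N = fst N"
definition nadj :: "net \<Rightarrow> nat \<Rightarrow> nat \<Rightarrow> bool" where "nadj N = fst (snd N)"
definition ncond :: "net \<Rightarrow> nat \<Rightarrow> nat \<Rightarrow> real" where "ncond N = snd (snd N)"

definition wf_net :: "net \<Rightarrow> bool" where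
  "wf_net N \<longleftrightarrow>
     (\<forall>u v. nadj N u v \<longrightarrow> nV N u \<and> nV N v) \<and>
     (\<forall>u v. nadj N u v = nadj N v u) \<and>
     (\<forall>u v. ncond N u v = ncond N v u) \<and>
     (\<forall>u v. 0 \<le> ncond N u v) \<and>
     (\<forall>u v. \<not> nadj N u v \<longrightarrow> ncond N u v = 0) \<and>
     (\<forall>u. finite {v. nadj N u v}) \<and>
     (\<forall>x y. nV N x \<longrightarrow> nV N y \<longrightarrow> (nadj N)\<^sup>*\<^sup>* x y)"

definition gdist :: "net \<Rightarrow> nat \<Rightarrow> nat \<Rightarrow> nat" where
  "gdist N x y = (LEAST n. (nadj N ^^ n) x y)"

definition gball :: "net \<Rightarrow> nat \<Rightarrow> real \<Rightarrow> nat set" where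
  "gball N x r = {y. nV N y \<and> real (gdist N x y) \<le> r}"

definition gcompl :: "net \<Rightarrow> nat \<Rightarrow> real \<Rightarrow> nat set" where
  "gcompl N x r = {y. nV N y} - gball N x r"

definition cdeg :: "net \<Rightarrow> nat \<Rightarrow> real" where
  "cdeg N u = (\<Sum>v\<in>{v. nadj N u v}. ncond N u v)"

definition tprob :: "net \<Rightarrow> nat \<Rightarrow> nat \<Rightarrow> real" where
  "tprob N u v = ncond N u v / cdeg N u"

text \<open>Dirichlet energy (each unordered edge counted once) and effective resistance
  via the Dirichlet principle; inverse 0 = \<infinity>.\<close>
definition energy :: "net \<Rightarrow> (nat \<Rightarrow> real) \<Rightarrow> ennreal" where
  "energy N f = (\<integral>\<^sup>+ p. ennreal (ncond N (fst p) (snd p) * (f (fst p) - f (snd p))\<^sup>2)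
                    \<partial>count_space UNIV) / 2"

definition reff :: "net \<Rightarrow> nat set \<Rightarrow> nat set \<Rightarrow> ennreal" where
  "reff N A B = inverse (INF f \<in> {f :: nat \<Rightarrow> real. (\<forall>a\<in>A. f a = 1) \<and> (\<forall>b\<in>B. f b = 0)}. energy N f)"

definition netM :: "net measure" where
  "netM = (PiM UNIV (\<lambda>_. count_space UNIV)) \<Otimes>\<^sub>M
          ((PiM UNIV (\<lambda>_. PiM UNIV (\<lambda>_. count_space UNIV))) \<Otimes>\<^sub>M
           (PiM UNIV (\<lambda>_. PiM UNIV (\<lambda>_. borel))))"

definition dnetM :: "(net \<times> nat \<times> nat) measure" where
  "dnetM = netM \<Otimes>\<^sub>M (count_space UNIV \<Otimes>\<^sub>M count_space UNIV)"

text \<open>Invariance under network isomorphisms (functionals of isomorphism classes of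
  doubly rooted networks).\<close>
definition iso_invariant :: "(net \<times> nat \<times> nat \<Rightarrow> ennreal) \<Rightarrow> bool" where
  "iso_invariant F \<longleftrightarrow>
     (\<forall>N N' \<phi> x y. wf_net N \<and> wf_net N' \<and> bij_betw \<phi> {u. nV N u} {u. nV N' u} \<and>
        (\<forall>u v. nV N u \<longrightarrow> nV N v \<longrightarrow>
            nadj N' (\<phi> u) (\<phi> v) = nadj N u v \<and> ncond N' (\<phi> u) (\<phi> v) = ncond N u v) \<and>
        nV N x \<and> nV N y \<longrightarrow> F (N, x, y) = F (N', \<phi> x, \<phi> y))"

definition random_rooted_network :: "'a measure \<Rightarrow> ('a \<Rightarrow> net) \<Rightarrow> ('a \<Rightarrow> nat) \<Rightarrow> bool" where
  "random_rooted_network M N \<rho> \<longleftrightarrow>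
     prob_space M \<and> N \<in> measurable M netM \<and> \<rho> \<in> measurable M (count_space UNIV) \<and>
     (\<forall>\<omega>\<in>space M. wf_net (N \<omega>) \<and> nV (N \<omega>) (\<rho> \<omega>))"

text \<open>Reversibility: a.s. c_rho > 0 and (G,X0,X1) =d (G,X1,X0) as doubly rooted
  networks up to isomorphism, tested against all measurable isomorphism-invariant F.\<close>
definition reversible_network :: "'a measure \<Rightarrow> ('a \<Rightarrow> net) \<Rightarrow> ('a \<Rightarrow> nat) \<Rightarrow> bool" where
  "reversible_network M N \<rho> \<longleftrightarrow>
     random_rooted_network M N \<rho> \<and>
     (AE \<omega> in M. 0 < cdeg (N \<omega>) (\<rho> \<omega>)) \<and>
     (\<forall>F. F \<in> borel_measurable dnetM \<longrightarrow> iso_invariant F \<longrightarrow>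
        (\<integral>\<^sup>+ \<omega>. (\<Sum>v\<in>{v. nadj (N \<omega>) (\<rho> \<omega>) v}.
                    ennreal (tprob (N \<omega>) (\<rho> \<omega>) v) * F (N \<omega>, \<rho> \<omega>, v)) \<partial>M)
      = (\<integral>\<^sup>+ \<omega>. (\<Sum>v\<in>{v. nadj (N \<omega>) (\<rho> \<omega>) v}.
                    ennreal (tprob (N \<omega>) (\<rho> \<omega>) v) * F (N \<omega>, v, \<rho> \<omega>)) \<partial>M))"

definition zeta_tilde :: "'a measure \<Rightarrow> ('a \<Rightarrow> net) \<Rightarrow> ('a \<Rightarrow> nat) \<Rightarrow> ereal" where
  "zeta_tilde M N \<rho> = Sup {ereal z | z. \<forall>\<delta>>0. AE \<omega> in M. \<forall>\<^sub>F R in sequentially.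
      ennreal (real R powr (z - \<delta>))
        \<le> reff (N \<omega>) (gball (N \<omega>) (\<rho> \<omega>) (real R powr (1 - \<delta>))) (gcompl (N \<omega>) (\<rho> \<omega>) (real R))}"

definition zeta_tilde0 :: "'a measure \<Rightarrow> ('a \<Rightarrow> net) \<Rightarrow> ('a \<Rightarrow> nat) \<Rightarrow> ereal" where
  "zeta_tilde0 M N \<rho> = Inf {ereal z | z. \<forall>\<delta>>0. AE \<omega> in M. \<forall>\<^sub>F R in sequentially.
      reff (N \<omega>) {\<rho> \<omega>} (gcompl (N \<omega>) (\<rho> \<omega>) (real R)) \<le> ennreal (real R powr (z + \<delta>))}"

end

theory Submission
  imports Defs
begin

lemma inv_anti: assumes "(a::ennreal) \<le> b" shows "inverse b \<le> inverse a"
proof (cases "a = 0 \<or> b = top")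
  case True then show ?thesis by auto
next
  case False
  then have "b \<noteq> top" "a \<noteq> top" using assms by (auto simp: top_unique)
  obtain x where x: "a = ennreal x" "0 \<le> x" using \<open>a \<noteq> top\<close> by (cases a) auto
  obtain y where y: "b = ennreal y" "0 \<le> y" using \<open>b \<noteq> top\<close> by (cases b) auto
  have "0 < x" "x \<le> y" using x y False assms by auto
  then show ?thesis using x y by (simp add: inverse_ennreal ennreal_leI le_imp_inverse_le)
qed

lemma inv_inv: "inverse (inverse (a::ennreal)) = a"
  using divide_ennreal_def one_divide_one_divide_ennreal by fastforce

lemma energy_contract:
  assumes L: "0 \<le> L" and H: "\<And>u v. (g u - g v)^2 \<le> L * (f u - f v)^2"
  shows "energy N g \<le> ennreal L * energy N f"
proof -
  have pw: "ennreal (ncond N (fst p) (snd p) * (g (fst p) - g (snd p))\<^sup>2)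
      \<le> ennreal L * ennreal (ncond N (fst p) (snd p) * (f (fst p) - f (snd p))\<^sup>2)" for p
  proof (cases "ncond N (fst p) (snd p) \<ge> 0")
    case True
    have "ncond N (fst p) (snd p) * (g (fst p) - g (snd p))\<^sup>2
        \<le> ncond N (fst p) (snd p) * (L * (f (fst p) - f (snd p))\<^sup>2)"
      using True H by (intro mult_left_mono) auto
    then show ?thesis using L True
      by (simp add: ennreal_mult[symmetric] ennreal_leI mult.left_commute)
  next
    case False
    then have "ncond N (fst p) (snd p) * (g (fst p) - g (snd p))\<^sup>2 \<le> 0"
      by (simp add: mult_nonpos_nonneg)
    then have "ennreal (ncond N (fst p) (snd p) * (g (fst p) - g (snd p))\<^sup>2) = 0" by (rule ennreal_neg)
    then show ?thesis by simp
  qed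
  have "(\<integral>\<^sup>+ p. ennreal (ncond N (fst p) (snd p) * (g (fst p) - g (snd p))\<^sup>2) \<partial>count_space UNIV)
      \<le> (\<integral>\<^sup>+ p. ennreal L * ennreal (ncond N (fst p) (snd p) * (f (fst p) - f (snd p))\<^sup>2) \<partial>count_space UNIV)"
    by (intro nn_integral_mono pw)
  also have "\<dots> = ennreal L * (\<integral>\<^sup>+ p. ennreal (ncond N (fst p) (snd p) * (f (fst p) - f (snd p))\<^sup>2) \<partial>count_space UNIV)"
    by (rule nn_integral_cmult) auto
  finally have "(\<integral>\<^sup>+ p. ennreal (ncond N (fst p) (snd p) * (g (fst p) - g (snd p))\<^sup>2) \<partial>count_space UNIV) / 2
     \<le> (ennreal L * (\<integral>\<^sup>+ p. ennreal (ncond N (fst p) (snd p) * (f (fst p) - f (snd p))\<^sup>2) \<partial>count_space UNIV)) / 2"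
    by (rule divide_right_mono_ennreal)
  then show ?thesis unfolding energy_def by (simp add: ennreal_times_divide)
qed

definition feas :: "nat set \<Rightarrow> nat set \<Rightarrow> (nat \<Rightarrow> real) set" where
  "feas A B = {f. (\<forall>a\<in>A. f a = 1) \<and> (\<forall>b\<in>B. f b = 0)}"
definition cond :: "net \<Rightarrow> nat set \<Rightarrow> nat set \<Rightarrow> ennreal" where
  "cond N A B = (INF f \<in> feas A B. energy N f)"
lemma reff_cond: "reff N A B = inverse (cond N A B)"
  by (simp add: reff_def cond_def feas_def)

lemma cond_le: "f \<in> feas A B \<Longrightarrow> cond N A B \<le> energy N f"
  unfolding cond_def by (rule INF_lower)

lemma keyK:
  assumes "h r = 1" "h x < 1/2"
  shows "cond N {r} {x} \<le> ennreal 4 * energy N h"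
proof -
  define a where "a = h x"
  have a: "a < 1/2" using assms a_def by simp
  define g where "g = (\<lambda>v. (h v - a) / (1 - a))"
  have "g \<in> feas {r} {x}" using assms a by (simp add: feas_def g_def a_def)
  hence "cond N {r} {x} \<le> energy N g" by (rule cond_le)
  also have "energy N g \<le> ennreal 4 * energy N h"
  proof (rule energy_contract)
    fix u v
    have p: "1 - a > 1/2" using a by simp
    have "(g u - g v)^2 = (h u - h v)^2 / (1 - a)^2"
      using p by (simp add: g_def diff_divide_distrib[symmetric] power_divide)
    also have "\<dots> \<le> (h u - h v)^2 / (1/2)^2"
    proof -
      have "(1/2)^2 \<le> (1 - a)^2" by (rule power_mono) (use p in auto)
      moreover have "0 < (1 - a)^2 * (1/2)^2" using p by simp
      ultimately show ?thesis by (intro divide_left_mono) auto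
    qed
    also have "\<dots> = 4 * (h u - h v)^2" by (simp add: power2_eq_square)
    finally show "(g u - g v)^2 \<le> 4 * (h u - h v)^2" .
  qed simp
  finally show ?thesis .
qed

lemma clip_lip: "\<bar>min 1 (max 0 s) - min 1 (max 0 t)\<bar> \<le> \<bar>s - (t::real)\<bar>"
  by (auto simp: min_def max_def abs_if)

lemma keyD:
  assumes r: "cond N {p} Z < ennreal r"
    and A: "\<forall>x\<in>A. ennreal (4*r) \<le> cond N {p} {x}"
  shows "cond N A Z \<le> ennreal (4*r)"
proof -
  obtain h where h: "h \<in> feas {p} Z" "energy N h < ennreal r"
    using r unfolding cond_def by (auto simp: INF_less_iff)
  have e4: "ennreal 4 * energy N h < ennreal (4*r)"
  proof -
    have "energy N h * ennreal 4 < ennreal r * ennreal 4"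
      by (rule ennreal_mult_strict_right_mono[OF h(2)]) auto
    moreover have "r \<ge> 0" proof -
      have "0 < ennreal r" using h(2) by (metis le_less_trans zero_le)
      thus ?thesis by simp
    qed
    then have "ennreal (4*r) = ennreal 4 * ennreal r" by (intro ennreal_mult) auto
    ultimately show ?thesis by (metis mult.commute)
  qed
  have half: "h x \<ge> 1/2" if "x \<in> A" for x
  proof (rule ccontr)
    assume "\<not> h x \<ge> 1/2"
    hence "cond N {p} {x} \<le> ennreal 4 * energy N h"
      using h(1) by (intro keyK) (auto simp: feas_def)
    with e4 A that show False by (meson leD le_less_trans)
  qed
  define f where "f = (\<lambda>v. min 1 (max 0 (2 * h v)))"
  have fa: "f x = 1" if "x \<in> A" for x using half[OF that] by (simp add: f_def)
  have fz: "f b = 0" if "b \<in> Z" for b using h(1) that by (simp add: f_def feas_def)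
  have "f \<in> feas A Z" using fa fz by (simp add: feas_def)
  hence "cond N A Z \<le> energy N f" by (rule cond_le)
  also have "energy N f \<le> ennreal 4 * energy N h"
  proof (rule energy_contract)
    fix u v
    have "\<bar>f u - f v\<bar> \<le> \<bar>2 * h u - 2 * h v\<bar>" unfolding f_def by (rule clip_lip)
    hence "\<bar>f u - f v\<bar>^2 \<le> \<bar>2 * h u - 2 * h v\<bar>^2" by (rule power_mono) simp
    thus "(f u - f v)^2 \<le> 4 * (h u - h v)^2" by (simp add: power2_eq_square algebra_simps)
  qed simp
  finally show ?thesis using e4 by simp
qed
lemma gd_le: "(nadj N ^^ n) x y \<Longrightarrow> gdist N x y \<le> n"
  unfolding gdist_def by (rule Least_le)

lemma gd_path: assumes "wf_net N" "nV N x" "nV N y" shows "(nadj N ^^ gdist N x y) x y"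
proof -
  have "(nadj N)\<^sup>*\<^sup>* x y" using assms unfolding wf_net_def by blast
  then obtain n where "(nadj N ^^ n) x y" by (auto simp: rtranclp_power)
  then show ?thesis unfolding gdist_def by (rule LeastI)
qed

lemma gd_self: "gdist N x x = 0"
  unfolding gdist_def by (rule Least_eq_0) simp

lemma reach_finite: assumes "wf_net N" shows "finite {y. \<exists>k\<le>n. (nadj N ^^ k) x y}"
proof (induction n)
  case 0 then show ?case by simp
next
  case (Suc n)
  let ?S = "{y. \<exists>k\<le>n. (nadj N ^^ k) x y}"
  have sub: "{y. \<exists>k\<le>Suc n. (nadj N ^^ k) x y} \<subseteq> ?S \<union> (\<Union>z\<in>?S. {v. nadj N z v})"
  proof
    fix y assume "y \<in> {y. \<exists>k\<le>Suc n. (nadj N ^^ k) x y}"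
    then obtain k where k: "k \<le> Suc n" "(nadj N ^^ k) x y" by auto
    show "y \<in> ?S \<union> (\<Union>z\<in>?S. {v. nadj N z v})"
    proof (cases "k = Suc n")
      case True
      with k obtain z where "(nadj N ^^ n) x z" "nadj N z y" by (auto elim: relpowp_Suc_E)
      then show ?thesis by blast
    next
      case False with k show ?thesis by auto
    qed
  qed
  have lf: "\<forall>u. finite {v. nadj N u v}" using assms unfolding wf_net_def by simp
  have "finite (\<Union>z\<in>?S. {v. nadj N z v})"
    using Suc.IH lf by (intro finite_UN_I) auto
  hence "finite (?S \<union> (\<Union>z\<in>?S. {v. nadj N z v}))" using Suc.IH by (rule finite_UnI[rotated])
  then show ?case using sub by (rule finite_subset[rotated])
qed

lemma ball_finite: assumes "wf_net N" "nV N x" shows "finite (gball N x (real n))"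
proof -
  have "gball N x (real n) \<subseteq> {y. \<exists>k\<le>n. (nadj N ^^ k) x y}"
  proof
    fix y assume "y \<in> gball N x (real n)"
    hence "nV N y" "gdist N x y \<le> n" by (auto simp: gball_def)
    then show "y \<in> {y. \<exists>k\<le>n. (nadj N ^^ k) x y}" using gd_path[OF assms \<open>nV N y\<close>] by blast
  qed
  then show ?thesis using reach_finite[OF assms(1)] by (rule finite_subset)
qed

lemma exact_dist:
  assumes "wf_net N" "nV N x" "infinite {v. nV N v}"
  shows "\<exists>z. nV N z \<and> gdist N x z = Suc R"
proof -
  have "\<not> {v. nV N v} \<subseteq> gball N x (real R)"
    using ball_finite[OF assms(1,2), of R] assms(3) finite_subset by blast
  then obtain y where y: "nV N y" "y \<notin> gball N x (real R)" by blast
  have gt: "gdist N x y > R" using y unfolding gball_def by auto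
  define n where "n = gdist N x y"
  have p: "(nadj N ^^ n) x y" using gd_path[OF assms(1,2) y(1)] n_def by simp
  define m where "m = n - Suc R"
  have m: "n = Suc R + m" using gt n_def m_def by simp
  have "(nadj N ^^ (Suc R + m)) x y" using p m by simp
  hence "(nadj N ^^ Suc R OO nadj N ^^ m) x y" by (simp only: relpowp_add)
  then obtain z where z1: "(nadj N ^^ Suc R) x z" and z2: "(nadj N ^^ m) z y"
    by (rule relcomppE)
  obtain w where "nadj N w z" using relpowp_Suc_E[OF z1] by blast
  hence vz: "nV N z" using assms(1) unfolding wf_net_def by blast
  have le: "gdist N x z \<le> Suc R" using z1 by (rule gd_le)
  have "\<not> gdist N x z < Suc R"
  proof
    assume lt: "gdist N x z < Suc R"
    have "(nadj N ^^ gdist N x z OO nadj N ^^ m) x y"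
      using gd_path[OF assms(1,2) vz] z2 by (rule relcomppI)
    hence "(nadj N ^^ (gdist N x z + m)) x y" by (simp only: relpowp_add)
    hence "n \<le> gdist N x z + m" using n_def by (simp add: gd_le)
    with lt m show False by simp
  qed
  with le vz show ?thesis by auto
qed
lemma ev_powr_ge: assumes c: "c > 0" shows "eventually (\<lambda>R. K \<le> real R powr c) sequentially"
proof -
  define T where "T = (max 1 K) powr (1/c)"
  have T: "T > 0" unfolding T_def by simp
  have "K \<le> real R powr c" if "R \<ge> nat \<lceil>T\<rceil>" for R
  proof -
    have "T \<le> real R" using that by linarith
    hence "T powr c \<le> real R powr c" using T c by (intro powr_mono2) auto
    moreover have "T powr c = max 1 K" unfolding T_def using c by (simp add: powr_powr)
    ultimately show ?thesis by linarith
  qed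
  then show ?thesis unfolding eventually_sequentially by blast
qed

lemma filterlim_floor_powr: assumes "c > 0"
  shows "filterlim (\<lambda>R. nat \<lfloor>real R powr c\<rfloor>) at_top sequentially"
  unfolding filterlim_at_top
proof
  fix Z :: nat
  show "eventually (\<lambda>R. Z \<le> nat \<lfloor>real R powr c\<rfloor>) sequentially"
    using ev_powr_ge[OF assms, of "real Z"]
    by (rule eventually_mono) (simp add: le_nat_iff le_floor_iff)
qed
lemma reff_mono: assumes "A \<subseteq> A'" "B \<subseteq> B'" shows "reff N A' B' \<le> reff N A B"
proof -
  have "feas A' B' \<subseteq> feas A B" using assms by (auto simp: feas_def)
  hence "cond N A B \<le> cond N A' B'" unfolding cond_def by (rule INF_superset_mono) simp
  thus ?thesis unfolding reff_cond by (rule inv_anti)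
qed

lemma det:
  assumes a: "a > 0" and b: "b > 0" and ab: "8 * b \<le> a"
    and A: "\<forall>x\<in>A. reff N {p} {x} \<le> ennreal b"
    and Z: "ennreal a \<le> reff N {p} Z"
  shows "ennreal (a/8) \<le> reff N A Z"
proof -
  have "cond N {p} Z = inverse (reff N {p} Z)" by (simp add: reff_cond inv_inv)
  also have "\<dots> \<le> inverse (ennreal a)" using Z by (rule inv_anti)
  also have "\<dots> = ennreal (1/a)" using a by (simp add: inverse_ennreal inverse_eq_divide)
  also have "\<dots> < ennreal (2/a)" using a by (intro ennreal_lessI) (auto simp: divide_strict_right_mono)
  finally have c1: "cond N {p} Z < ennreal (2/a)" .
  have c2: "\<forall>x\<in>A. ennreal (4*(2/a)) \<le> cond N {p} {x}"
  proof
    fix x assume "x \<in> A"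
    have "8/a \<le> 1/b" using a b ab by (simp add: field_simps)
    hence "ennreal (4*(2/a)) \<le> ennreal (1/b)" by (intro ennreal_leI) simp
    also have "\<dots> = inverse (ennreal b)" using b by (simp add: inverse_ennreal inverse_eq_divide)
    also have "\<dots> \<le> inverse (reff N {p} {x})" using A \<open>x \<in> A\<close> by (intro inv_anti) auto
    also have "\<dots> = cond N {p} {x}" by (simp add: reff_cond inv_inv)
    finally show "ennreal (4*(2/a)) \<le> cond N {p} {x}" .
  qed
  have "cond N A Z \<le> ennreal (4*(2/a))" by (rule keyD[OF c1 c2])
  hence "inverse (ennreal (4*(2/a))) \<le> reff N A Z" unfolding reff_cond by (rule inv_anti)
  moreover have "inverse (ennreal (4*(2/a))) = ennreal (a/8)" using a by (simp add: inverse_ennreal)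
  ultimately show ?thesis by simp
qed

definition Hp :: "net \<Rightarrow> nat \<Rightarrow> real \<Rightarrow> real \<Rightarrow> nat \<Rightarrow> bool" where
  "Hp N p z d R \<longleftrightarrow> (SUP x \<in> gball N p (real R). reff N {p} {x}) \<le> ennreal (real R powr (z + d))
         \<and> ennreal (real R powr (z - d)) \<le> reff N {p} (gcompl N p (real R))"

lemma omegaU:
  assumes wf: "wf_net N" and p: "nV N p" and inf: "infinite {v. nV N v}" and z: "z > 0" and d: "d > 0"
    and H: "eventually (Hp N p z (d/2)) sequentially"
  shows "eventually (\<lambda>R. reff N {p} (gcompl N p (real R)) \<le> ennreal (real R powr (z + d))) sequentially"
proof -
  have H1: "eventually (\<lambda>R. Hp N p z (d/2) (Suc R)) sequentially"
    using H by (simp add: eventually_sequentially_Suc)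
  have H2: "eventually (\<lambda>R. 2 powr (z + d/2) \<le> real R powr (d/2)) sequentially"
    using d by (intro ev_powr_ge) simp
  have H3: "eventually (\<lambda>R. 1 \<le> R) sequentially" by (rule eventually_ge_at_top)
  show ?thesis using H1 H2 H3
  proof eventually_elim
    case (elim R)
    obtain y where y: "nV N y" "gdist N p y = Suc R" using exact_dist[OF wf p inf] by blast
    have yZ: "y \<in> gcompl N p (real R)" using y by (simp add: gcompl_def gball_def)
    have yB: "y \<in> gball N p (real (Suc R))" using y by (simp add: gball_def)
    have "reff N {p} (gcompl N p (real R)) \<le> reff N {p} {y}"
      using yZ by (intro reff_mono) auto
    also have "\<dots> \<le> (SUP x \<in> gball N p (real (Suc R)). reff N {p} {x})"
      using yB by (rule SUP_upper)
    also have "\<dots> \<le> ennreal (real (Suc R) powr (z + d/2))"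
      using elim(1) by (simp add: Hp_def)
    also have "\<dots> \<le> ennreal (real R powr (z + d))"
    proof (rule ennreal_leI)
      have R1: "real R \<ge> 1" using elim(3) by simp
      have "real (Suc R) powr (z + d/2) \<le> (2 * real R) powr (z + d/2)"
        using R1 z d by (intro powr_mono2) auto
      also have "\<dots> = 2 powr (z + d/2) * real R powr (z + d/2)"
        using R1 by (simp add: powr_mult)
      also have "\<dots> \<le> real R powr (d/2) * real R powr (z + d/2)"
        using elim(2) by (intro mult_right_mono) auto
      also have "\<dots> = real R powr (z + d)" using R1 by (simp add: powr_add[symmetric] add.commute)
      finally show "real (Suc R) powr (z + d/2) \<le> real R powr (z + d)" .
    qed
    finally show ?case .
  qed
qed
lemma gball_mono: "r \<le> r' \<Longrightarrow> gball N p r \<subseteq> gball N p r'"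
  by (auto simp: gball_def)

lemma gball_floor: "t \<ge> 0 \<Longrightarrow> gball N p t \<subseteq> gball N p (real (nat \<lfloor>t\<rfloor>))"
proof
  fix x assume "x \<in> gball N p t"
  hence x: "nV N x" "real (gdist N p x) \<le> t" by (auto simp: gball_def)
  hence "int (gdist N p x) \<le> \<lfloor>t\<rfloor>" by (simp add: le_floor_iff)
  hence "gdist N p x \<le> nat \<lfloor>t\<rfloor>" by linarith
  thus "x \<in> gball N p (real (nat \<lfloor>t\<rfloor>))" using x(1) by (simp add: gball_def)
qed

lemma omegaS:
  assumes z: "z > 0" and d: "d > 0"
    and H: "eventually (Hp N p z (min d (1/2) * min z 1 / 4)) sequentially"
  shows "eventually (\<lambda>R. ennreal (real R powr (z - d))
            \<le> reff N (gball N p (real R powr (1 - d))) (gcompl N p (real R))) sequentially"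
proof -
  define d0 where "d0 = min d (1/2)"
  define d' where "d' = min d (1/2) * min z 1 / 4"
  have d0: "0 < d0" "d0 \<le> 1/2" "d0 \<le> d" using d unfolding d0_def by auto
  have d'0: "0 < d'" using d0 z unfolding d'_def d0_def[symmetric] by simp
  have d'1: "d' \<le> d0 / 4" unfolding d'_def d0_def[symmetric] using d0 by (simp add: mult_left_le)
  have d'2: "4 * d' \<le> d0 * z" unfolding d'_def d0_def[symmetric] using d0 z
    by (simp add: mult_left_mono)
  define e where "e = z - d' - (1 - d0) * (z + d')"
  have "0 \<le> d0 * d'" "0 < d0 * z" using d0 d'0 z by simp_all
  moreover have "e = d0 * z - 2 * d' + d0 * d'" unfolding e_def by (simp add: algebra_simps)
  ultimately have e: "e > 0" using d'2 by linarith
  have dd: "d - d' > 0" using d'1 d0 by simp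
  have E2: "eventually (\<lambda>R. Hp N p z d' (nat \<lfloor>real R powr (1 - d0)\<rfloor>)) sequentially"
    using H unfolding d'_def[symmetric]
    by (rule eventually_compose_filterlim[OF _ filterlim_floor_powr]) (use d0 in simp)
  have E3: "eventually (\<lambda>R. 1 \<le> real R powr (1 - d0)) sequentially"
    using d0 by (intro ev_powr_ge) simp
  have E4: "eventually (\<lambda>R. 8 \<le> real R powr e) sequentially"
    using e by (intro ev_powr_ge)
  have E5: "eventually (\<lambda>R. 8 \<le> real R powr (d - d')) sequentially"
    using dd by (intro ev_powr_ge)
  have E6: "eventually (\<lambda>R. 1 \<le> R) sequentially" by (rule eventually_ge_at_top)
  show ?thesis using H[folded d'_def] E2 E3 E4 E5 E6
  proof eventually_elim
    case (elim R)
    define t where "t = real R powr (1 - d0)"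
    define Rp where "Rp = nat \<lfloor>t\<rfloor>"
    have R1: "real R \<ge> 1" using elim(6) by simp
    have t1: "t \<ge> 1" using elim(3) t_def by simp
    have Rpt: "real Rp \<le> t" using t1 unfolding Rp_def by linarith
    have Rp1: "real Rp \<ge> 1" using t1 unfolding Rp_def by (simp add: le_nat_iff le_floor_iff)
    define A where "A = gball N p (real R powr (1 - d))"
    have "A \<subseteq> gball N p t"
      unfolding A_def t_def using R1 d0 by (intro gball_mono powr_mono) auto
    also have "\<dots> \<subseteq> gball N p (real Rp)" unfolding Rp_def using t1 by (intro gball_floor) simp
    finally have AB: "A \<subseteq> gball N p (real Rp)" .
    define a where "a = real R powr (z - d')"
    define b where "b = real Rp powr (z + d')"
    have a0: "a > 0" using R1 unfolding a_def by simp
    have b0: "b > 0" using Rp1 unfolding b_def by simp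
    have "b \<le> t powr (z + d')" unfolding b_def using Rpt Rp1 z d'0 by (intro powr_mono2) auto
    also have "\<dots> = real R powr ((1 - d0) * (z + d'))" unfolding t_def by (simp add: powr_powr)
    finally have bt: "b \<le> real R powr ((1 - d0) * (z + d'))" .
    have aeq: "a = real R powr ((1 - d0) * (z + d')) * real R powr e"
      unfolding a_def e_def using R1 by (simp add: powr_add[symmetric])
    have ab: "8 * b \<le> a"
    proof -
      have "8 * b \<le> real R powr e * real R powr ((1 - d0) * (z + d'))"
        using bt elim(4) b0 by (intro mult_mono) auto
      thus ?thesis using aeq by (simp add: mult.commute)
    qed
    have Ab: "\<forall>x\<in>A. reff N {p} {x} \<le> ennreal b"
    proof
      fix x assume "x \<in> A"
      hence "reff N {p} {x} \<le> (SUP y \<in> gball N p (real Rp). reff N {p} {y})"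
        using AB by (intro SUP_upper) auto
      also have "\<dots> \<le> ennreal b" using elim(2) unfolding Hp_def b_def Rp_def t_def by simp
      finally show "reff N {p} {x} \<le> ennreal b" .
    qed
    have Za: "ennreal a \<le> reff N {p} (gcompl N p (real R))"
      using elim(1) unfolding Hp_def a_def by simp
    have "ennreal (a/8) \<le> reff N A (gcompl N p (real R))" by (rule det[OF a0 b0 ab Ab Za])
    moreover have "real R powr (z - d) \<le> a/8"
    proof -
      have "a = real R powr (z - d) * real R powr (d - d')"
        unfolding a_def using R1 by (simp add: powr_add[symmetric])
      moreover have "real R powr (z - d) * 8 \<le> real R powr (z - d) * real R powr (d - d')"
        using elim(5) by (intro mult_left_mono) auto
      ultimately show ?thesis by simp
    qed
    ultimately show ?case unfolding A_def by (meson ennreal_leI order_trans)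
  qed
qed
theorem theorem4p7:
  fixes M :: "'a measure" and N :: "'a \<Rightarrow> net" and \<rho> :: "'a \<Rightarrow> nat" and \<zeta> :: real
  assumes "reversible_network M N \<rho>"
    and "AE \<omega> in M. infinite {v. nV (N \<omega>) v}"
    and "\<zeta> > 0"
    and "\<forall>\<delta>>0. AE \<omega> in M. \<forall>\<^sub>F R in sequentially.
           (SUP x \<in> gball (N \<omega>) (\<rho> \<omega>) (real R). reff (N \<omega>) {\<rho> \<omega>} {x})
              \<le> ennreal (real R powr (\<zeta> + \<delta>))
         \<and> ennreal (real R powr (\<zeta> - \<delta>))
              \<le> reff (N \<omega>) {\<rho> \<omega>} (gcompl (N \<omega>) (\<rho> \<omega>) (real R))"
  shows "zeta_tilde M N \<rho> = ereal \<zeta> \<and> zeta_tilde0 M N \<rho> = ereal \<zeta>"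
proof -
  have rn: "random_rooted_network M N \<rho>" using assms(1) by (simp add: reversible_network_def)
  hence ps: "prob_space M" and wfa: "\<forall>\<omega>\<in>space M. wf_net (N \<omega>) \<and> nV (N \<omega>) (\<rho> \<omega>)"
    by (auto simp: random_rooted_network_def)
  have AEwf: "AE \<omega> in M. wf_net (N \<omega>) \<and> nV (N \<omega>) (\<rho> \<omega>)" using wfa by (intro AE_I2) auto
  have H: "AE \<omega> in M. eventually (Hp (N \<omega>) (\<rho> \<omega>) \<zeta> d) sequentially" if "d > 0" for d
    using assms(4) that unfolding Hp_def by blast
  have noF: "\<not> (AE \<omega> in M. False)" using prob_space.AE_False[OF ps] by simp
  have U: "AE \<omega> in M. eventually (\<lambda>R. reff (N \<omega>) {\<rho> \<omega>} (gcompl (N \<omega>) (\<rho> \<omega>) (real R))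
              \<le> ennreal (real R powr (\<zeta> + d))) sequentially" if d: "d > 0" for d
  proof -
    have "d/2 > 0" using d by simp
    from H[OF this] AEwf assms(2) show ?thesis
  proof eventually_elim
    case (elim \<omega>)
    show ?case using elim d assms(3) by (intro omegaU) auto
  qed
  qed
  have S0mem: "ereal \<zeta> \<in> {ereal z | z. \<forall>\<delta>>0. AE \<omega> in M. \<forall>\<^sub>F R in sequentially.
      reff (N \<omega>) {\<rho> \<omega>} (gcompl (N \<omega>) (\<rho> \<omega>) (real R)) \<le> ennreal (real R powr (z + \<delta>))}"
    using U by blast
  have S0low: "ereal \<zeta> \<le> ereal z" if zP: "\<forall>\<delta>>0. AE \<omega> in M. \<forall>\<^sub>F R in sequentially.
      reff (N \<omega>) {\<rho> \<omega>} (gcompl (N \<omega>) (\<rho> \<omega>) (real R)) \<le> ennreal (real R powr (z + \<delta>))" for z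
  proof (rule ccontr)
    assume "\<not> ereal \<zeta> \<le> ereal z"
    hence lt: "z < \<zeta>" by simp
    define \<delta> where "\<delta> = (\<zeta> - z) / 3"
    have \<delta>: "\<delta> > 0" using lt by (simp add: \<delta>_def)
    have "AE \<omega> in M. False" using zP[rule_format, OF \<delta>] H[OF \<delta>]
    proof eventually_elim
      case (elim \<omega>)
      have "eventually (\<lambda>R. False) sequentially"
        using elim(1) elim(2) eventually_gt_at_top[of "1::nat"]
      proof eventually_elim
        case (elim R)
        have "ennreal (real R powr (\<zeta> - \<delta>)) \<le> ennreal (real R powr (z + \<delta>))"
          using elim(1) elim(2) unfolding Hp_def by (meson order_trans)
        hence "real R powr (\<zeta> - \<delta>) \<le> real R powr (z + \<delta>)" by simp
        moreover have "real R powr (z + \<delta>) < real R powr (\<zeta> - \<delta>)"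
          using elim(3) \<delta>_def lt by (intro powr_less_mono) auto
        ultimately show False by simp
      qed
      thus False by (simp add: eventually_False)
    qed
    with noF show False by simp
  qed
  have P0: "zeta_tilde0 M N \<rho> = ereal \<zeta>"
    unfolding zeta_tilde0_def
  proof (rule antisym)
    show "Inf {ereal z | z. \<forall>\<delta>>0. AE \<omega> in M. \<forall>\<^sub>F R in sequentially.
      reff (N \<omega>) {\<rho> \<omega>} (gcompl (N \<omega>) (\<rho> \<omega>) (real R)) \<le> ennreal (real R powr (z + \<delta>))} \<le> ereal \<zeta>"
      using S0mem by (rule Inf_lower)
    show "ereal \<zeta> \<le> Inf {ereal z | z. \<forall>\<delta>>0. AE \<omega> in M. \<forall>\<^sub>F R in sequentially.
      reff (N \<omega>) {\<rho> \<omega>} (gcompl (N \<omega>) (\<rho> \<omega>) (real R)) \<le> ennreal (real R powr (z + \<delta>))}"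
      by (rule Inf_greatest) (use S0low in blast)
  qed
  have Smem: "ereal \<zeta> \<in> {ereal z | z. \<forall>\<delta>>0. AE \<omega> in M. \<forall>\<^sub>F R in sequentially.
      ennreal (real R powr (z - \<delta>))
        \<le> reff (N \<omega>) (gball (N \<omega>) (\<rho> \<omega>) (real R powr (1 - \<delta>))) (gcompl (N \<omega>) (\<rho> \<omega>) (real R))}"
  proof -
    have "AE \<omega> in M. \<forall>\<^sub>F R in sequentially.
      ennreal (real R powr (\<zeta> - \<delta>))
        \<le> reff (N \<omega>) (gball (N \<omega>) (\<rho> \<omega>) (real R powr (1 - \<delta>))) (gcompl (N \<omega>) (\<rho> \<omega>) (real R))"
      if \<delta>: "\<delta> > 0" for \<delta>
    proof -
      have pos: "min \<delta> (1/2) * min \<zeta> 1 / 4 > 0" using \<delta> assms(3) by simp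
      show ?thesis using H[OF pos]
      proof eventually_elim
        case (elim \<omega>)
        show ?case using elim \<delta> assms(3) by (intro omegaS) auto
      qed
    qed
    thus ?thesis by blast
  qed
  have Sup: "ereal z \<le> ereal \<zeta>" if zP: "\<forall>\<delta>>0. AE \<omega> in M. \<forall>\<^sub>F R in sequentially.
      ennreal (real R powr (z - \<delta>))
        \<le> reff (N \<omega>) (gball (N \<omega>) (\<rho> \<omega>) (real R powr (1 - \<delta>))) (gcompl (N \<omega>) (\<rho> \<omega>) (real R))" for z
  proof (rule ccontr)
    assume "\<not> ereal z \<le> ereal \<zeta>"
    hence lt: "\<zeta> < z" by simp
    define \<delta> where "\<delta> = (z - \<zeta>) / 3"
    have \<delta>: "\<delta> > 0" using lt by (simp add: \<delta>_def)
    have "AE \<omega> in M. False" using zP[rule_format, OF \<delta>] U[OF \<delta>] AEwf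
    proof eventually_elim
      case (elim \<omega>)
      have "eventually (\<lambda>R. False) sequentially"
        using elim(1) elim(2) eventually_gt_at_top[of "1::nat"]
      proof eventually_elim
        case elim2: (elim R)
        have "\<rho> \<omega> \<in> gball (N \<omega>) (\<rho> \<omega>) (real R powr (1 - \<delta>))"
          using elim(3) by (simp add: gball_def gd_self)
        hence "reff (N \<omega>) (gball (N \<omega>) (\<rho> \<omega>) (real R powr (1 - \<delta>))) (gcompl (N \<omega>) (\<rho> \<omega>) (real R))
             \<le> reff (N \<omega>) {\<rho> \<omega>} (gcompl (N \<omega>) (\<rho> \<omega>) (real R))"
          by (intro reff_mono) auto
        hence "ennreal (real R powr (z - \<delta>)) \<le> ennreal (real R powr (\<zeta> + \<delta>))"
          using elim2(1) elim2(2) by (meson order_trans)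
        hence "real R powr (z - \<delta>) \<le> real R powr (\<zeta> + \<delta>)" by simp
        moreover have "real R powr (\<zeta> + \<delta>) < real R powr (z - \<delta>)"
          using elim2(3) \<delta>_def lt by (intro powr_less_mono) auto
        ultimately show False by simp
      qed
      thus False by (simp add: eventually_False)
    qed
    with noF show False by simp
  qed
  have P1: "zeta_tilde M N \<rho> = ereal \<zeta>"
    unfolding zeta_tilde_def
  proof (rule antisym)
    show "ereal \<zeta> \<le> Sup {ereal z | z. \<forall>\<delta>>0. AE \<omega> in M. \<forall>\<^sub>F R in sequentially.
      ennreal (real R powr (z - \<delta>))
        \<le> reff (N \<omega>) (gball (N \<omega>) (\<rho> \<omega>) (real R powr (1 - \<delta>))) (gcompl (N \<omega>) (\<rho> \<omega>) (real R))}"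
      using Smem by (rule Sup_upper)
    show "Sup {ereal z | z. \<forall>\<delta>>0. AE \<omega> in M. \<forall>\<^sub>F R in sequentially.
      ennreal (real R powr (z - \<delta>))
        \<le> reff (N \<omega>) (gball (N \<omega>) (\<rho> \<omega>) (real R powr (1 - \<delta>))) (gcompl (N \<omega>) (\<rho> \<omega>) (real R))} \<le> ereal \<zeta>"
      by (rule Sup_least) (use Sup in blast)
  qed
  show ?thesis using P0 P1 by simp
qed

end
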